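(* Let $n \geq 1$. The map $\Psi_n$ defined below is a bijection from the set of strong compositions of $n$ onto the set of subsets of $[n-1]$, and whenever $\Psi_n(\alpha) = I$ we have \[ n - \ell(\alpha) = |I| \qquad\text{and}\qquad 2b(\alpha) - \binom{\ell(\alpha)}{2} + \operatorname{coinv}(\alpha) = \binom{n}{2} - \operatorname{Sum}(I). \] Consequently, \[ \sum_{\alpha \vDash n} z^{n-\ell(\alpha)} q^{2b(\alpha) - \binom{\ell(\alpha)}{2} + \operatorname{coinv}(\alpha)} = \sum_{I \subset [n-1]} z^{|I|} q^{\binom{n}{2} - \operatorname{Sum}(I)}. \]
   Context: A strong composition $\alpha \vDash n$ is a sequence $(\alpha_1, \ldots, \alpha_\ell)$ of positive integers summing to $n$; $\ell(\alpha)$ is its length. $\operatorname{coinv}(\alpha) = \#\{1 \leq i < j \leq \ell(\alpha) : \alpha_i < \alpha_j\}$. If $\mu = (\mu_1 \geq \mu_2 \geq \cdots)$ is the weakly decreasing rearrangement of $\alpha$, then $b(\alpha) = \sum_i (i-1)\mu_i$. For $I \subset [n-1]$, $\operatorname{Sum}(I) = \sum_{i \in I} i$. Definition of $\Psi_n$: draw $\alpha$ as a left-justified diagram whose $i$-th row from the top has $\alpha_i$ cells. For $t \geq 1$ let $m_t$ be the number of cells in columns $1, \ldots, t$. For each $t \geq 1$, list the rows $r_1 < r_2 < \cdots < r_p$ (top to bottom) having at least $t$ cells; for each $q \in \{1, \ldots, p\}$ such that row $r_q$ has at least $t+1$ cells, write the number $m_t - (q-1)$ in the cell of row $r_q$ in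 column $t+1$. (Equivalently: fill the second column top to bottom with $m_1, m_1 - 1, \ldots$, skipping missing cells, then delete the first column and empty rows and repeat with maximum $m_2$, and so on.) Then $\Psi_n(\alpha)$ is the set of all numbers written. For example $\Psi_{11}(1,3,2,1,3,1) = \{2,4,5,7,9\}$. *)

theory Defs
  imports Main
begin

definition compositions :: "nat \<Rightarrow> nat list set" where
  "compositions n = {\<alpha>. (\<forall>x\<in>set \<alpha>. 0 < x) \<and> sum_list \<alpha> = n}"

definition coinv :: "nat list \<Rightarrow> nat" where
  "coinv \<alpha> = card {(i, j). i < j \<and> j < length \<alpha> \<and> \<alpha> ! i < \<alpha> ! j}"

text \<open>b(alpha) = sum_i (i-1) mu_i with mu the weakly decreasing rearrangement (0-indexed here).\<close>
definition bstat :: "nat list \<Rightarrow> nat" where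
  "bstat \<alpha> = (let \<mu> = rev (sort \<alpha>) in \<Sum>i<length \<mu>. i * \<mu> ! i)"

text \<open>m_t = number of cells in columns 1..t of the diagram of alpha.\<close>
definition mcols :: "nat list \<Rightarrow> nat \<Rightarrow> nat" where
  "mcols \<alpha> t = (\<Sum>i<length \<alpha>. min (\<alpha> ! i) t)"

text \<open>Psi: for t >= 1 and a row i (0-indexed) with at least t+1 cells, the number written
  in column t+1 of that row is m_t - (q-1), where q-1 is the number of rows above row i
  having at least t cells.\<close>
definition Psi :: "nat list \<Rightarrow> nat set" where
  "Psi \<alpha> = {mcols \<alpha> t - card {j. j < i \<and> t \<le> \<alpha> ! j} | t i.
               1 \<le> t \<and> i < length \<alpha> \<and> t + 1 \<le> \<alpha> ! i}"

end

theory Submission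
  imports Defs "HOL-Library.Multiset"
begin


definition dec :: "nat list \<Rightarrow> nat list" where
  "dec \<alpha> = map (\<lambda>x. x - 1) (filter (\<lambda>x. 2 \<le> x) \<alpha>)"

primrec rs :: "nat list \<Rightarrow> nat set" where
  "rs [] = {}"
| "rs (x # xs) = (if 2 \<le> x then {Suc (length xs)} else {}) \<union> rs xs"

definition mc :: "nat list \<Rightarrow> nat \<Rightarrow> nat" where
  "mc \<alpha> t = sum_list (map (\<lambda>y. min y t) \<alpha>)"

definition Q :: "nat list \<Rightarrow> (nat \<Rightarrow> nat) \<Rightarrow> nat set" where
  "Q \<alpha> off = {off t + (mc \<alpha> t - length (filter (\<lambda>y. t \<le> y) (take i \<alpha>))) | t i.
       1 \<le> t \<and> i < length \<alpha> \<and> t + 1 \<le> \<alpha> ! i}"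

lemma dec_Nil[simp]: "dec [] = []" by (simp add: dec_def)
lemma dec_Cons: "dec (x # xs) = (if 2 \<le> x then (x - 1) # dec xs else dec xs)"
  by (simp add: dec_def)

lemma mc_Nil[simp]: "mc [] t = 0" by (simp add: mc_def)
lemma mc_Cons[simp]: "mc (x # xs) t = min x t + mc xs t" by (simp add: mc_def)

lemma mcols_mc: "mcols \<alpha> t = mc \<alpha> t"
  unfolding mcols_def mc_def
  by (simp add: sum_list_sum_nth atLeast0LessThan)

lemma card_take: assumes "i < length \<alpha>"
  shows "card {j. j < i \<and> t \<le> \<alpha> ! j} = length (filter (\<lambda>y. t \<le> y) (take i \<alpha>))"
proof -
  have "{j. j < i \<and> t \<le> \<alpha> ! j} = {ia. ia < i \<and> t \<le> take i \<alpha> ! ia}" by auto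
  then show ?thesis using assms by (simp add: length_filter_conv_card min_def)
qed

lemma Psi_Q: "Psi \<alpha> = Q \<alpha> (\<lambda>_. 0)"
proof -
  have "\<And>t i. i < length \<alpha> \<Longrightarrow> mcols \<alpha> t - card {j. j < i \<and> t \<le> \<alpha> ! j}
     = mc \<alpha> t - length (filter (\<lambda>y. t \<le> y) (take i \<alpha>))"
    by (simp add: mcols_mc card_take)
  note eq = this
  show ?thesis unfolding Psi_def Q_def
  proof (rule set_eqI, rule iffI)
    fix v assume "v \<in> {mcols \<alpha> t - card {j. j < i \<and> t \<le> \<alpha> ! j} |t i.
       1 \<le> t \<and> i < length \<alpha> \<and> t + 1 \<le> \<alpha> ! i}"
    then obtain t i where "v = mcols \<alpha> t - card {j. j < i \<and> t \<le> \<alpha> ! j}" "1 \<le> t \<and> i < length \<alpha> \<and> t + 1 \<le> \<alpha> ! i" by blast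
    then show "v \<in> {0 + (mc \<alpha> t - length (filter (\<lambda>y. t \<le> y) (take i \<alpha>))) |t i.
       1 \<le> t \<and> i < length \<alpha> \<and> t + 1 \<le> \<alpha> ! i}" using eq[of i t] by (intro CollectI exI[of _ t] exI[of _ i]) simp
  next
    fix v assume "v \<in> {0 + (mc \<alpha> t - length (filter (\<lambda>y. t \<le> y) (take i \<alpha>))) |t i.
       1 \<le> t \<and> i < length \<alpha> \<and> t + 1 \<le> \<alpha> ! i}"
    then obtain t i where "v = 0 + (mc \<alpha> t - length (filter (\<lambda>y. t \<le> y) (take i \<alpha>)))" "1 \<le> t \<and> i < length \<alpha> \<and> t + 1 \<le> \<alpha> ! i" by blast
    then show "v \<in> {mcols \<alpha> t - card {j. j < i \<and> t \<le> \<alpha> ! j} |t i.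
       1 \<le> t \<and> i < length \<alpha> \<and> t + 1 \<le> \<alpha> ! i}" using eq[of i t] by (intro CollectI exI[of _ t] exI[of _ i]) simp
  qed
qed

lemma Q_Nil[simp]: "Q [] off = {}" by (simp add: Q_def)

lemma Q_cong: "(\<And>t. 1 \<le> t \<Longrightarrow> f t = g t) \<Longrightarrow> Q \<alpha> f = Q \<alpha> g"
  unfolding Q_def by (metis (no_types, lifting))

lemma Q_const: "Q \<alpha> (\<lambda>t. c) = (\<lambda>v. c + v) ` Q \<alpha> (\<lambda>_. 0)"
  unfolding Q_def by auto

lemma cnt_le: "1 \<le> t \<Longrightarrow> length (filter (\<lambda>y. t \<le> y) (take i \<beta>)) \<le> mc \<beta> t"
proof (induction \<beta> arbitrary: i)
  case Nil then show ?case by simp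
next
  case (Cons x xs)
  show ?case
  proof (cases i)
    case 0 then show ?thesis by simp
  next
    case (Suc i0)
    have "length (filter (\<lambda>y. t \<le> y) (take i0 xs)) \<le> mc xs t" using Cons by blast
    then show ?thesis using Suc Cons.prems by (auto simp: min_def)
  qed
qed



lemma Q_Cons: "Q (x # \<beta>) off = {off t + mc (x # \<beta>) t | t. 1 \<le> t \<and> t + 1 \<le> x}
   \<union> Q \<beta> (\<lambda>t. off t + (min x t - (if t \<le> x then 1 else 0)))" (is "?L = ?A \<union> ?B")
proof (rule set_eqI, rule iffI)
  fix v assume "v \<in> ?L"
  then obtain t i where v: "v = off t + (mc (x # \<beta>) t - length (filter (\<lambda>y. t \<le> y) (take i (x # \<beta>))))"
    and h: "1 \<le> t" "i < length (x # \<beta>)" "t + 1 \<le> (x # \<beta>) ! i"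
    unfolding Q_def by blast
  show "v \<in> ?A \<union> ?B"
  proof (cases i)
    case 0
    have "v = off t + mc (x # \<beta>) t" "t + 1 \<le> x" using v h 0 by auto
    then have "v \<in> ?A" using h(1) by blast
    then show ?thesis by blast
  next
    case (Suc i0)
    define c where "c = length (filter (\<lambda>y. t \<le> y) (take i0 \<beta>))"
    have c: "c \<le> mc \<beta> t" unfolding c_def using cnt_le h(1) .
    have e: "(if t \<le> x then 1 else 0) \<le> min x t" using h(1) by auto
    have "v = (off t + (min x t - (if t \<le> x then 1 else 0))) + (mc \<beta> t - c)"
      using v Suc c e h(1) by (cases "t \<le> x") (simp_all add: c_def)
    moreover have "i0 < length \<beta>" "t + 1 \<le> \<beta> ! i0" using h Suc by auto
    ultimately have "v \<in> ?B" unfolding Q_def c_def using h(1) by blast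
    then show ?thesis by blast
  qed
next
  fix v assume "v \<in> ?A \<union> ?B"
  then show "v \<in> ?L"
  proof
    assume "v \<in> ?A"
    then obtain t where "v = off t + mc (x # \<beta>) t" "1 \<le> t" "t + 1 \<le> x" by blast
    then show ?thesis unfolding Q_def
      by (intro CollectI exI[of _ t] exI[of _ 0]) simp
  next
    assume "v \<in> ?B"
    then obtain t i0 where v: "v = (off t + (min x t - (if t \<le> x then 1 else 0))) +
        (mc \<beta> t - length (filter (\<lambda>y. t \<le> y) (take i0 \<beta>)))"
      and h: "1 \<le> t" "i0 < length \<beta>" "t + 1 \<le> \<beta> ! i0"
      unfolding Q_def by blast
    define c where "c = length (filter (\<lambda>y. t \<le> y) (take i0 \<beta>))"
    have c: "c \<le> mc \<beta> t" unfolding c_def using cnt_le h(1) .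
    have e: "(if t \<le> x then 1 else 0) \<le> min x t" using h(1) by auto
    have "v = off t + (mc (x # \<beta>) t - length (filter (\<lambda>y. t \<le> y) (take (Suc i0) (x # \<beta>))))"
      using v c e h(1) by (cases "t \<le> x") (simp_all add: c_def)
    then show ?thesis unfolding Q_def using h
      by (intro CollectI exI[of _ t] exI[of _ "Suc i0"]) simp
  qed
qed

definition pos :: "nat list \<Rightarrow> bool" where "pos \<alpha> = (\<forall>x\<in>set \<alpha>. 0 < x)"

lemma pos_Cons[simp]: "pos (x # xs) = (0 < x \<and> pos xs)" by (simp add: pos_def)
lemma pos_Nil[simp]: "pos []" by (simp add: pos_def)

lemma mc_one: "pos \<alpha> \<Longrightarrow> mc \<alpha> 1 = length \<alpha>"
  by (induction \<alpha>) auto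

lemma mc_Suc: "pos \<alpha> \<Longrightarrow> mc \<alpha> (Suc t) = length \<alpha> + mc (dec \<alpha>) t"
  by (induction \<alpha>) (auto simp: dec_Cons)

lemma pos_dec: "pos (dec \<alpha>)"
  by (induction \<alpha>) (auto simp: dec_Cons)

lemma Q_decomp: "pos \<alpha> \<Longrightarrow>
   Q \<alpha> off = (\<lambda>r. off 1 + r) ` rs \<alpha> \<union> Q (dec \<alpha>) (\<lambda>t. off (Suc t) + length \<alpha>)"
proof (induction \<alpha> arbitrary: off)
  case Nil then show ?case by simp
next
  case (Cons x \<beta>)
  define off2 where "off2 = (\<lambda>t. off t + (min x t - (if t \<le> x then 1 else 0)))"
  have x: "0 < x" "pos \<beta>" using Cons.prems by auto
  have L: "Q (x # \<beta>) off = {off t + mc (x # \<beta>) t | t. 1 \<le> t \<and> t + 1 \<le> x} \<union> Q \<beta> off2"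
    unfolding off2_def by (rule Q_Cons)
  have IH: "Q \<beta> off2 = (\<lambda>r. off2 1 + r) ` rs \<beta> \<union> Q (dec \<beta>) (\<lambda>t. off2 (Suc t) + length \<beta>)"
    using Cons.IH x(2) by blast
  have o1: "off2 1 = off 1" using x by (simp add: off2_def)
  show ?case
  proof (cases "2 \<le> x")
    case False
    then have x1: "x = 1" using x by auto
    have A: "{off t + mc (x # \<beta>) t | t. 1 \<le> t \<and> t + 1 \<le> x} = {}" using x1 by auto
    have "Q (dec \<beta>) (\<lambda>t. off2 (Suc t) + length \<beta>) = Q (dec \<beta>) (\<lambda>t. off (Suc t) + length (x # \<beta>))"
      by (rule Q_cong) (simp add: off2_def x1)
    then show ?thesis using L IH A o1 x1 by (simp add: dec_Cons)
  next
    case True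
    define off3 where "off3 = (\<lambda>t. off (Suc t) + length (x # \<beta>))"
    have D: "dec (x # \<beta>) = (x - 1) # dec \<beta>" using True by (simp add: dec_Cons)
    have R: "Q (dec (x # \<beta>)) off3 = {off3 t + mc ((x - 1) # dec \<beta>) t | t. 1 \<le> t \<and> t + 1 \<le> x - 1}
      \<union> Q (dec \<beta>) (\<lambda>t. off3 t + (min (x - 1) t - (if t \<le> x - 1 then 1 else 0)))"
      unfolding D by (rule Q_Cons)
    have c: "Q (dec \<beta>) (\<lambda>t. off2 (Suc t) + length \<beta>) =
       Q (dec \<beta>) (\<lambda>t. off3 t + (min (x - 1) t - (if t \<le> x - 1 then 1 else 0)))"
      by (rule Q_cong) (use True in \<open>auto simp: off2_def off3_def min_def\<close>)
    have A: "{off t + mc (x # \<beta>) t | t. 1 \<le> t \<and> t + 1 \<le> x} =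
       {off 1 + Suc (length \<beta>)} \<union> {off3 t + mc ((x - 1) # dec \<beta>) t | t. 1 \<le> t \<and> t + 1 \<le> x - 1}"
    proof (rule set_eqI, rule iffI)
      fix v assume "v \<in> {off t + mc (x # \<beta>) t | t. 1 \<le> t \<and> t + 1 \<le> x}"
      then obtain t where t: "v = off t + mc (x # \<beta>) t" "1 \<le> t" "t + 1 \<le> x" by blast
      show "v \<in> {off 1 + Suc (length \<beta>)} \<union> {off3 t + mc ((x - 1) # dec \<beta>) t | t. 1 \<le> t \<and> t + 1 \<le> x - 1}"
      proof (cases "t = 1")
        case True then show ?thesis using t mc_one[of "x # \<beta>"] x by simp
      next
        case False
        then obtain s where s: "t = Suc s" "1 \<le> s" using t(2) by (cases t) auto
        have "v = off3 s + mc ((x - 1) # dec \<beta>) s"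
          using t(1) s mc_Suc[of "x # \<beta>" s] x D by (simp add: off3_def)
        moreover have "s + 1 \<le> x - 1" using s t(3) by simp
        ultimately show ?thesis using s(2) by blast
      qed
    next
      fix v assume "v \<in> {off 1 + Suc (length \<beta>)} \<union> {off3 t + mc ((x - 1) # dec \<beta>) t | t. 1 \<le> t \<and> t + 1 \<le> x - 1}"
      then show "v \<in> {off t + mc (x # \<beta>) t | t. 1 \<le> t \<and> t + 1 \<le> x}"
      proof
        assume "v \<in> {off 1 + Suc (length \<beta>)}"
        then show ?thesis using mc_one[of "x # \<beta>"] x True
          by (intro CollectI exI[of _ 1]) simp
      next
        assume "v \<in> {off3 t + mc ((x - 1) # dec \<beta>) t | t. 1 \<le> t \<and> t + 1 \<le> x - 1}"
        then obtain s where s: "v = off3 s + mc ((x - 1) # dec \<beta>) s" "1 \<le> s" "s + 1 \<le> x - 1" by blast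
        have "v = off (Suc s) + mc (x # \<beta>) (Suc s)"
          using s(1) mc_Suc[of "x # \<beta>" s] x D by (simp add: off3_def)
        then show ?thesis using s by (intro CollectI exI[of _ "Suc s"]) simp
      qed
    qed
    have rsx: "rs (x # \<beta>) = {Suc (length \<beta>)} \<union> rs \<beta>" using True by simp
    show ?thesis
      unfolding L IH R[unfolded off3_def] c[unfolded off3_def] A[unfolded off3_def] rsx o1
      by auto
  qed
qed



lemma Psi_decomp: "pos \<alpha> \<Longrightarrow> Psi \<alpha> = rs \<alpha> \<union> (\<lambda>v. length \<alpha> + v) ` Psi (dec \<alpha>)"
  unfolding Psi_Q using Q_decomp[of \<alpha> "\<lambda>_. 0"] Q_const[of "dec \<alpha>" "length \<alpha>"] by simp

lemma Psi_Nil[simp]: "Psi [] = {}" by (simp add: Psi_Q)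

lemma rs_sub: "rs xs \<subseteq> {1..length xs}"
  by (induction xs) auto

lemma finite_rs[simp]: "finite (rs xs)"
  using rs_sub finite_subset by blast

lemma card_rs: "card (rs xs) = length (dec xs)"
proof (induction xs)
  case Nil then show ?case by simp
next
  case (Cons x xs)
  have "Suc (length xs) \<notin> rs xs" using rs_sub[of xs] by auto
  then show ?case using Cons by (simp add: dec_Cons)
qed

lemma sum_dec: "pos \<alpha> \<Longrightarrow> sum_list \<alpha> = length \<alpha> + sum_list (dec \<alpha>)"
  by (induction \<alpha>) (auto simp: dec_Cons)

lemma length_le_sum: "pos \<alpha> \<Longrightarrow> length \<alpha> \<le> sum_list \<alpha>"
  by (induction \<alpha>) auto

lemma comp_iff: "\<alpha> \<in> compositions n \<longleftrightarrow> pos \<alpha> \<and> sum_list \<alpha> = n"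
  by (simp add: compositions_def pos_def)

lemma props: "pos \<alpha> \<Longrightarrow> sum_list \<alpha> = n \<Longrightarrow> Psi \<alpha> \<subseteq> {1..<n} \<and> card (Psi \<alpha>) = n - length \<alpha>"
proof (induction n arbitrary: \<alpha> rule: less_induct)
  case (less n)
  show ?case
  proof (cases "\<alpha> = []")
    case True then show ?thesis using less by simp
  next
    case False
    let ?l = "length \<alpha>" and ?a = "dec \<alpha>"
    define m where "m = n - ?l"
    have sm: "sum_list ?a = m" "n = ?l + m" using sum_dec[OF less(2)] less(3) unfolding m_def by auto
    have "m < n" using False sm by (cases \<alpha>) auto
    then have IH: "Psi ?a \<subseteq> {1..<m} \<and> card (Psi ?a) = m - length ?a"
      using less(1) pos_dec sm by blast
    have la: "length ?a \<le> m" using length_le_sum[OF pos_dec[of \<alpha>]] sm by simp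
    have D: "Psi \<alpha> = rs \<alpha> \<union> (\<lambda>v. ?l + v) ` Psi ?a" using Psi_decomp less(2) .
    have s1: "rs \<alpha> \<subseteq> {1..?l}" by (rule rs_sub)
    have s2: "(\<lambda>v. ?l + v) ` Psi ?a \<subseteq> {?l<..<n}" using IH sm by auto
    have fin: "finite (Psi ?a)" using IH finite_subset by blast
    have s1': "\<forall>v\<in>rs \<alpha>. v \<le> ?l" using s1 by auto
    have s2': "\<forall>v\<in>(\<lambda>v. ?l + v) ` Psi ?a. ?l < v \<and> v < n" using s2 by auto
    have dj: "rs \<alpha> \<inter> (\<lambda>v. ?l + v) ` Psi ?a = {}" using s1' s2' by force
    have "card (Psi \<alpha>) = card (rs \<alpha>) + card ((\<lambda>v. ?l + v) ` Psi ?a)"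
      unfolding D by (rule card_Un_disjoint) (use fin dj in auto)
    also have "\<dots> = length ?a + (m - length ?a)"
      using IH card_rs by (simp add: card_image)
    also have "\<dots> = n - ?l" using la sm by simp
    finally have "card (Psi \<alpha>) = n - ?l" .
    moreover have "Psi \<alpha> \<subseteq> {1..<n}"
    proof -
      have "rs \<alpha> \<subseteq> {1..<n}"
      proof (cases "rs \<alpha> = {}")
        case False
        then have "length ?a \<ge> 1" using card_rs[of \<alpha>] finite_rs[of \<alpha>]
          by (metis One_nat_def Suc_leI card_gt_0_iff)
        then have "?l < n" using la sm by simp
        then show ?thesis using s1 by auto
      qed simp
      moreover have "(\<lambda>v. ?l + v) ` Psi ?a \<subseteq> {1..<n}" using s2' by auto
      ultimately show ?thesis using D by blast
    qed
    ultimately show ?thesis by blast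
  qed
qed

lemma reconstruct: "length \<alpha> = length \<beta> \<Longrightarrow> pos \<alpha> \<Longrightarrow> pos \<beta> \<Longrightarrow> rs \<alpha> = rs \<beta>
   \<Longrightarrow> dec \<alpha> = dec \<beta> \<Longrightarrow> \<alpha> = \<beta>"
proof (induction \<alpha> \<beta> rule: list_induct2)
  case Nil then show ?case by simp
next
  case (Cons x xs y ys)
  have n1: "Suc (length xs) \<notin> rs xs" "Suc (length ys) \<notin> rs ys"
    using rs_sub[of xs] rs_sub[of ys] by auto
  have xy: "(2 \<le> x) = (2 \<le> y)" using Cons.prems(3) n1 Cons.hyps by (auto split: if_splits)
  have r: "rs xs = rs ys"
  proof -
    have "rs xs = rs (x # xs) - {Suc (length xs)}" using n1 by auto
    also have "\<dots> = rs (y # ys) - {Suc (length ys)}" using Cons.prems(3) Cons.hyps by simp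
    also have "\<dots> = rs ys" using n1 by auto
    finally show ?thesis .
  qed
  show ?case
  proof (cases "2 \<le> x")
    case True
    then have "x - 1 = y - 1" "dec xs = dec ys" using xy Cons.prems(4) by (auto simp: dec_Cons)
    then show ?thesis using Cons True xy r by auto
  next
    case False
    then have "x = y" "dec xs = dec ys" using xy Cons.prems by (auto simp: dec_Cons)
    then show ?thesis using Cons r by auto
  qed
qed

lemma Psi_inj: "pos \<alpha> \<Longrightarrow> pos \<beta> \<Longrightarrow> sum_list \<alpha> = n \<Longrightarrow> sum_list \<beta> = n \<Longrightarrow> Psi \<alpha> = Psi \<beta> \<Longrightarrow> \<alpha> = \<beta>"
proof (induction n arbitrary: \<alpha> \<beta> rule: less_induct)
  case (less n)
  have c: "n - length \<alpha> = n - length \<beta>"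
    using props[OF less(2) less(4)] props[OF less(3) less(5)] less(6) by simp
  have l: "length \<alpha> = length \<beta>"
    using c length_le_sum[OF less(2)] length_le_sum[OF less(3)] less(4) less(5) by arith
  show ?case
  proof (cases "\<alpha> = []")
    case True then show ?thesis using l by simp
  next
    case False
    let ?l = "length \<alpha>"
    define m where "m = n - ?l"
    have sm: "sum_list (dec \<alpha>) = m" "sum_list (dec \<beta>) = m" "n = ?l + m"
      using sum_dec[OF less(2)] sum_dec[OF less(3)] less(4,5) l unfolding m_def by auto
    have "m < n" using False sm by (cases \<alpha>) auto
    have Da: "Psi \<alpha> = rs \<alpha> \<union> (\<lambda>v. ?l + v) ` Psi (dec \<alpha>)" using Psi_decomp less(2) .
    have Db: "Psi \<beta> = rs \<beta> \<union> (\<lambda>v. ?l + v) ` Psi (dec \<beta>)" using Psi_decomp less(3) l by simp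
    have s1: "rs \<alpha> \<subseteq> {..?l}" "rs \<beta> \<subseteq> {..?l}" using rs_sub[of \<alpha>] rs_sub[of \<beta>] l by auto
    have s2: "(\<lambda>v. ?l + v) ` Psi (dec \<alpha>) \<subseteq> {?l<..}" "(\<lambda>v. ?l + v) ` Psi (dec \<beta>) \<subseteq> {?l<..}"
      using props[OF pos_dec sm(1)] props[OF pos_dec sm(2)] by auto
    have "rs \<alpha> = Psi \<alpha> \<inter> {..?l}" using Da s1 s2 by auto
    moreover have "rs \<beta> = Psi \<beta> \<inter> {..?l}" using Db s1 s2 by auto
    ultimately have r: "rs \<alpha> = rs \<beta>" using less(6) by simp
    have "(\<lambda>v. ?l + v) ` Psi (dec \<alpha>) = Psi \<alpha> \<inter> {?l<..}" using Da s1 s2 by auto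
    moreover have "(\<lambda>v. ?l + v) ` Psi (dec \<beta>) = Psi \<beta> \<inter> {?l<..}" using Db s1 s2 by auto
    ultimately have "(\<lambda>v. ?l + v) ` Psi (dec \<alpha>) = (\<lambda>v. ?l + v) ` Psi (dec \<beta>)" using less(6) by simp
    then have "Psi (dec \<alpha>) = Psi (dec \<beta>)" by (simp add: inj_image_eq_iff)
    then have "dec \<alpha> = dec \<beta>" using less(1)[OF \<open>m < n\<close> pos_dec pos_dec sm(1) sm(2)] by blast
    then show ?thesis using reconstruct l less(2,3) r by blast
  qed
qed

lemma build: "A \<subseteq> {1..k} \<Longrightarrow> card A = length ys \<Longrightarrow> pos ys \<Longrightarrow>
   \<exists>\<alpha>. length \<alpha> = k \<and> pos \<alpha> \<and> rs \<alpha> = A \<and> dec \<alpha> = ys"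
proof (induction k arbitrary: A ys)
  case 0 then show ?case by (intro exI[of _ "[]"]) auto
next
  case (Suc k)
  show ?case
  proof (cases "Suc k \<in> A")
    case True
    have fA: "finite A" using Suc.prems(1) finite_subset by blast
    then have "card A \<ge> 1" using True by (metis One_nat_def Suc_leI card_gt_0_iff empty_iff)
    then obtain y ys' where ys: "ys = y # ys'" using Suc.prems(2) by (cases ys) auto
    have "A - {Suc k} \<subseteq> {1..k}" using Suc.prems(1) by auto
    moreover have "card (A - {Suc k}) = length ys'" using Suc.prems(2) ys True fA by simp
    moreover have "pos ys'" "0 < y" using Suc.prems(3) ys by auto
    ultimately obtain \<alpha> where a: "length \<alpha> = k" "pos \<alpha>" "rs \<alpha> = A - {Suc k}" "dec \<alpha> = ys'"
      using Suc.IH by blast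
    show ?thesis
      by (intro exI[of _ "Suc y # \<alpha>"]) (use a True ys \<open>0 < y\<close> in \<open>auto simp: dec_Cons\<close>)
  next
    case False
    have "A \<subseteq> {1..k}"
    proof
      fix x assume x: "x \<in> A"
      then have "x \<in> {1..Suc k}" using Suc.prems(1) by blast
      moreover have "x \<noteq> Suc k" using x False by blast
      ultimately show "x \<in> {1..k}" by auto
    qed
    then obtain \<alpha> where a: "length \<alpha> = k" "pos \<alpha>" "rs \<alpha> = A" "dec \<alpha> = ys"
      using Suc.IH Suc.prems by blast
    show ?thesis
      by (intro exI[of _ "1 # \<alpha>"]) (use a in \<open>auto simp: dec_Cons\<close>)
  qed
qed

lemma Psi_surj: "I \<subseteq> {1..<n} \<Longrightarrow> \<exists>\<alpha>. pos \<alpha> \<and> sum_list \<alpha> = n \<and> Psi \<alpha> = I"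
proof (induction n arbitrary: I rule: less_induct)
  case (less n)
  show ?case
  proof (cases "n = 0")
    case True then show ?thesis using less(2) by (intro exI[of _ "[]"]) auto
  next
    case False
    have fI: "finite I" using less(2) finite_subset by blast
    have cI: "card I \<le> n - 1" using card_mono[OF _ less(2)] by simp
    define k where "k = n - card I"
    have k: "1 \<le> k" "n = k + card I" using cI False unfolding k_def by auto
    define A where "A = I \<inter> {..k}"
    define B where "B = I \<inter> {k<..}"
    define J where "J = (\<lambda>v. v - k) ` B"
    have Iv: "\<forall>v\<in>I. 1 \<le> v \<and> v < n" using less(2) by auto
    have J: "J \<subseteq> {1..<card I}"
    proof
      fix w assume "w \<in> J"
      then obtain v where v: "v \<in> I" "k < v" "w = v - k" unfolding J_def B_def by auto
      then have "v < n" using Iv by blast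
      then show "w \<in> {1..<card I}" using v k by auto
    qed
    have "card I < n" using k by simp
    then obtain \<alpha>' where a': "pos \<alpha>'" "sum_list \<alpha>' = card I" "Psi \<alpha>' = J"
      using less(1) J by blast
    have cJ: "card J = card I - length \<alpha>'" using props[OF a'(1,2)] a'(3) by simp
    have "inj_on (\<lambda>v. v - k) B" unfolding B_def by (auto simp: inj_on_def)
    then have cB: "card J = card B" unfolding J_def by (simp add: card_image)
    have "I = A \<union> B" "A \<inter> B = {}" unfolding A_def B_def by auto
    then have "card I = card A + card B" using fI by (metis card_Un_disjoint finite_Un)
    moreover have "length \<alpha>' \<le> card I" using length_le_sum[OF a'(1)] a'(2) by simp
    ultimately have lA: "card A = length \<alpha>'" using cJ cB by simp
    have "A \<subseteq> {1..k}" using less(2) unfolding A_def by auto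
    then obtain \<alpha> where a: "length \<alpha> = k" "pos \<alpha>" "rs \<alpha> = A" "dec \<alpha> = \<alpha>'"
      using build lA a'(1) by blast
    have s: "sum_list \<alpha> = n" using sum_dec[OF a(2)] a a'(2) k by simp
    have "(\<lambda>v. k + v) ` J = B" unfolding J_def B_def image_image
    proof (rule set_eqI, rule iffI)
      fix w assume "w \<in> (\<lambda>x. k + (x - k)) ` (I \<inter> {k<..})"
      then show "w \<in> I \<inter> {k<..}" by auto
    next
      fix w assume w: "w \<in> I \<inter> {k<..}"
      then have "w = k + (w - k)" by auto
      then show "w \<in> (\<lambda>x. k + (x - k)) ` (I \<inter> {k<..})" using w by blast
    qed
    then have "Psi \<alpha> = I" using Psi_decomp[OF a(2)] a a'(3) \<open>I = A \<union> B\<close> by simp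
    then show ?thesis using a s by blast
  qed
qed



primrec pm :: "nat list \<Rightarrow> nat" where
  "pm [] = 0"
| "pm (x # xs) = sum_list (map (min x) xs) + pm xs"

primrec cv :: "nat list \<Rightarrow> nat" where
  "cv [] = 0"
| "cv (x # xs) = length (filter (\<lambda>y. x < y) xs) + cv xs"

primrec Xc :: "nat list \<Rightarrow> nat" where
  "Xc [] = 0"
| "Xc (x # xs) = (if x < 2 then length (filter (\<lambda>y. 2 \<le> y) xs) else 0) + Xc xs"

definition g :: "nat list \<Rightarrow> nat" where
  "g xs = (\<Sum>i<length xs. i * xs ! i)"

lemma g_Cons: "g (x # xs) = sum_list xs + g xs"
  unfolding g_def
  by (simp add: sum.lessThan_Suc_shift sum_list_sum_nth atLeast0LessThan sum.distrib del: sum.lessThan_Suc)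

lemma pm_sorted: "sorted_wrt (\<ge>) xs \<Longrightarrow> pm xs = g xs"
proof (induction xs)
  case Nil then show ?case by (simp add: g_def)
next
  case (Cons x xs)
  have "map (min x) xs = xs" using Cons.prems by (induction xs) (auto simp: min_def)
  then show ?case using Cons by (simp add: g_Cons)
qed

lemma pm_double: "2 * pm xs + sum_list xs = (\<Sum>x\<leftarrow>xs. \<Sum>y\<leftarrow>xs. min x y)"
proof (induction xs)
  case Nil then show ?case by simp
next
  case (Cons x xs)
  have "(\<Sum>z\<leftarrow>xs. min z x) = (\<Sum>y\<leftarrow>xs. min x y)" by (simp add: min.commute)
  then show ?case using Cons by (simp add: sum_list_addf)
qed

lemma sum_list_mset: "sum_list (map f xs) = sum_mset (image_mset f (mset xs))"
  by (induction xs) auto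

lemma pm_perm: "mset xs = mset ys \<Longrightarrow> pm xs = pm ys"
proof -
  assume m: "mset xs = mset ys"
  have "(\<Sum>x\<leftarrow>xs. \<Sum>y\<leftarrow>xs. min x y) = (\<Sum>x\<leftarrow>ys. \<Sum>y\<leftarrow>ys. min x y)"
    unfolding sum_list_mset m ..
  moreover have "sum_list xs = sum_list ys" using m by (metis sum_mset_sum_list)
  ultimately show ?thesis using pm_double[of xs] pm_double[of ys] by simp
qed

lemma bstat_pm: "bstat \<alpha> = pm \<alpha>"
proof -
  have "bstat \<alpha> = g (rev (sort \<alpha>))" by (simp add: bstat_def g_def)
  also have "\<dots> = pm (rev (sort \<alpha>))"
    by (rule pm_sorted[symmetric]) (simp add: sorted_wrt_rev)
  also have "\<dots> = pm \<alpha>" by (rule pm_perm) simp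
  finally show ?thesis .
qed

lemma choose2_Suc: "Suc k choose 2 = k + (k choose 2)"
  by (simp add: numeral_2_eq_2)

lemma sum_min_dec: "pos \<beta> \<Longrightarrow> 2 \<le> x \<Longrightarrow>
   sum_list (map (min x) \<beta>) = length \<beta> + sum_list (map (min (x - 1)) (dec \<beta>))"
  by (induction \<beta>) (auto simp: dec_Cons min_def)

lemma sum_min_one: "pos \<beta> \<Longrightarrow> sum_list (map (min 1) \<beta>) = length \<beta>"
  by (induction \<beta>) auto

lemma pm_dec: "pos \<alpha> \<Longrightarrow> pm \<alpha> = (length \<alpha> choose 2) + pm (dec \<alpha>)"
proof (induction \<alpha>)
  case Nil then show ?case by simp
next
  case (Cons x xs)
  show ?case
  proof (cases "2 \<le> x")
    case True
    then show ?thesis using Cons sum_min_dec[of xs x]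
      by (simp add: dec_Cons choose2_Suc)
  next
    case False
    then have "x = 1" using Cons.prems by auto
    then show ?thesis using Cons sum_min_one[of xs]
      by (simp add: dec_Cons choose2_Suc)
  qed
qed

lemma filter_dec: "pos \<beta> \<Longrightarrow> 2 \<le> x \<Longrightarrow>
   length (filter (\<lambda>y. x < y) \<beta>) = length (filter (\<lambda>y. x - 1 < y) (dec \<beta>))"
  by (induction \<beta>) (auto simp: dec_Cons)

lemma cv_dec: "pos \<alpha> \<Longrightarrow> cv \<alpha> = cv (dec \<alpha>) + Xc \<alpha>"
proof (induction \<alpha>)
  case Nil then show ?case by simp
next
  case (Cons x xs)
  show ?case
  proof (cases "2 \<le> x")
    case True
    then show ?thesis using Cons filter_dec[of xs x]
      by (simp add: dec_Cons)
  next
    case False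
    then have x1: "x = 1" using Cons.prems by auto
    have "filter (\<lambda>y. 1 < y) xs = filter (\<lambda>y. 2 \<le> y) xs" by (rule filter_cong) auto
    then show ?thesis using Cons x1 by (simp add: dec_Cons)
  qed
qed

lemma length_dec: "length (dec xs) = length (filter (\<lambda>y. 2 \<le> y) xs)"
  by (simp add: dec_def)

lemma L_identity: "\<Sum>(rs \<alpha>) + Xc \<alpha> + (length (dec \<alpha>) choose 2) = length \<alpha> * length (dec \<alpha>)"
proof (induction \<alpha>)
  case Nil then show ?case by simp
next
  case (Cons x xs)
  have n1: "Suc (length xs) \<notin> rs xs" using rs_sub[of xs] by auto
  show ?case
  proof (cases "2 \<le> x")
    case True
    then show ?thesis using Cons n1 by (simp add: dec_Cons choose2_Suc algebra_simps)
  next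
    case False
    then show ?thesis using Cons by (simp add: dec_Cons length_dec algebra_simps)
  qed
qed



lemma pairs_Cons: "{(i, j). i < j \<and> j < length (x # xs) \<and> (x # xs) ! i < (x # xs) ! j}
  = (\<lambda>j. (0, Suc j)) ` {j. j < length xs \<and> x < xs ! j}
    \<union> (\<lambda>(i, j). (Suc i, Suc j)) ` {(i, j). i < j \<and> j < length xs \<and> xs ! i < xs ! j}"
  (is "?L = ?A \<union> ?B")
proof (rule set_eqI, rule iffI)
  fix p assume "p \<in> ?L"
  then obtain i j where p: "p = (i, j)" "i < j" "j < Suc (length xs)" "(x # xs) ! i < (x # xs) ! j" by auto
  then obtain j0 where j: "j = Suc j0" by (cases j) auto
  show "p \<in> ?A \<union> ?B"
  proof (cases i)
    case 0
    then have "p = (0, Suc j0)" "j0 < length xs" "x < xs ! j0" using p j by auto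
    then show ?thesis by blast
  next
    case (Suc i0)
    then have "p = (Suc i0, Suc j0)" "(i0, j0) \<in> {(i, j). i < j \<and> j < length xs \<and> xs ! i < xs ! j}"
      using p j by auto
    then have "p \<in> ?B" by (intro rev_image_eqI[of "(i0, j0)"]) auto
    then show ?thesis by blast
  qed
next
  fix p assume "p \<in> ?A \<union> ?B"
  then show "p \<in> ?L" by auto
qed

lemma coinv_cv: "coinv \<alpha> = cv \<alpha>"
proof (induction \<alpha>)
  case Nil then show ?case by (simp add: coinv_def)
next
  case (Cons x xs)
  let ?S = "{(i, j). i < j \<and> j < length xs \<and> xs ! i < xs ! j}"
  have fS: "finite ?S" by (rule finite_subset[of _ "{..<length xs} \<times> {..<length xs}"]) auto
  have dj: "(\<lambda>j. (0::nat, Suc j)) ` {j. j < length xs \<and> x < xs ! j} \<inter> (\<lambda>(i, j). (Suc i, Suc j)) ` ?S = {}"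
    by auto
  have i1: "inj (\<lambda>j. (0::nat, Suc j))" by (auto simp: inj_def)
  have i2: "inj (\<lambda>(i::nat, j::nat). (Suc i, Suc j))" by (auto simp: inj_def)
  have "coinv (x # xs) = card ((\<lambda>j. (0::nat, Suc j)) ` {j. j < length xs \<and> x < xs ! j})
        + card ((\<lambda>(i, j). (Suc i, Suc j)) ` ?S)"
    unfolding coinv_def pairs_Cons by (rule card_Un_disjoint) (use fS dj in auto)
  also have "\<dots> = card {j. j < length xs \<and> x < xs ! j} + card ?S"
    using card_image[OF inj_on_subset[OF i1]] card_image[OF inj_on_subset[OF i2]] by simp
  also have "\<dots> = length (filter (\<lambda>y. x < y) xs) + coinv xs"
    by (simp add: length_filter_conv_card coinv_def)
  finally show ?case using Cons by simp
qed

lemma sum_Psi: assumes "pos \<alpha>"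
  shows "\<Sum>(Psi \<alpha>) = \<Sum>(rs \<alpha>) + length \<alpha> * card (Psi (dec \<alpha>)) + \<Sum>(Psi (dec \<alpha>))"
proof -
  let ?l = "length \<alpha>" and ?a = "dec \<alpha>"
  have P: "Psi ?a \<subseteq> {1..<sum_list ?a}" using props[OF pos_dec refl] by blast
  have fin: "finite (Psi ?a)" using P finite_subset by blast
  have s1': "\<forall>v\<in>rs \<alpha>. v \<le> ?l" using rs_sub[of \<alpha>] by auto
  have s2': "\<forall>v\<in>(\<lambda>v. ?l + v) ` Psi ?a. ?l < v" using P by auto
  have dj: "rs \<alpha> \<inter> (\<lambda>v. ?l + v) ` Psi ?a = {}" using s1' s2' by force
  have "\<Sum>(Psi \<alpha>) = \<Sum>(rs \<alpha>) + \<Sum>((\<lambda>v. ?l + v) ` Psi ?a)"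
    unfolding Psi_decomp[OF assms] by (rule sum.union_disjoint) (use fin dj in auto)
  also have "\<Sum>((\<lambda>v. ?l + v) ` Psi ?a) = (\<Sum>v\<in>Psi ?a. ?l + v)"
    by (subst sum.reindex) (auto simp: inj_on_def)
  also have "\<dots> = ?l * card (Psi ?a) + \<Sum>(Psi ?a)" by (simp add: sum.distrib)
  finally show ?thesis by simp
qed

lemma choose2_add: "(l + m) choose 2 = (l choose 2) + l * m + (m choose 2)"
  by (induction m) (simp_all add: choose2_Suc algebra_simps)

lemma stat: "pos \<alpha> \<Longrightarrow> sum_list \<alpha> = n \<Longrightarrow>
   int (\<Sum>(Psi \<alpha>)) + 2 * int (pm \<alpha>) - int (length \<alpha> choose 2) + int (cv \<alpha>) = int (n choose 2)"
proof (induction n arbitrary: \<alpha> rule: less_induct)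
  case (less n)
  show ?case
  proof (cases "\<alpha> = []")
    case True then show ?thesis using less by simp
  next
    case False
    let ?l = "length \<alpha>" and ?a = "dec \<alpha>"
    define m where "m = n - ?l"
    have sm: "sum_list ?a = m" "n = ?l + m" using sum_dec[OF less(2)] less(3) unfolding m_def by auto
    have "m < n" using False sm by (cases \<alpha>) auto
    then have IH: "int (\<Sum>(Psi ?a)) + 2 * int (pm ?a) - int (length ?a choose 2) + int (cv ?a) = int (m choose 2)"
      using less(1) pos_dec sm by blast
    have la: "length ?a \<le> m" using length_le_sum[OF pos_dec[of \<alpha>]] sm by simp
    have cP: "card (Psi ?a) = m - length ?a" using props[OF pos_dec sm(1)] by blast
    have SP: "\<Sum>(Psi \<alpha>) = \<Sum>(rs \<alpha>) + ?l * (m - length ?a) + \<Sum>(Psi ?a)"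
      using sum_Psi[OF less(2)] cP by simp
    have pmd: "pm \<alpha> = (?l choose 2) + pm ?a" using pm_dec[OF less(2)] .
    have cvd: "cv \<alpha> = cv ?a + Xc \<alpha>" using cv_dec[OF less(2)] .
    have L: "\<Sum>(rs \<alpha>) + Xc \<alpha> + (length ?a choose 2) = ?l * length ?a" by (rule L_identity)
    have N: "n choose 2 = (?l choose 2) + ?l * m + (m choose 2)" using sm(2) choose2_add by simp
    have mm: "int (?l * (m - length ?a)) = int ?l * int m - int ?l * int (length ?a)"
      using la by (simp add: of_nat_diff right_diff_distrib)
    have SPi: "int (\<Sum>(Psi \<alpha>)) = int (\<Sum>(rs \<alpha>)) + int (?l * (m - length ?a)) + int (\<Sum>(Psi ?a))"
      using SP by simp
    have Li: "int (\<Sum>(rs \<alpha>)) + int (Xc \<alpha>) + int (length ?a choose 2) = int ?l * int (length ?a)"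
      using L by (metis of_nat_add of_nat_mult)
    have Ni: "int (n choose 2) = int (?l choose 2) + int ?l * int m + int (m choose 2)"
      using N by (metis of_nat_add of_nat_mult)
    show ?thesis using IH SPi mm Li Ni pmd cvd by simp
  qed
qed



theorem theorem1p5:
  fixes n :: nat
  assumes "1 \<le> n"
  shows "bij_betw Psi (compositions n) (Pow {1..<n})
    \<and> (\<forall>\<alpha>\<in>compositions n.
          n - length \<alpha> = card (Psi \<alpha>)
        \<and> 2 * int (bstat \<alpha>) - int (length \<alpha> choose 2) + int (coinv \<alpha>)
            = int (n choose 2) - int (\<Sum>(Psi \<alpha>)))
    \<and> (\<forall>(z::'a::field) (q::'a). q \<noteq> 0 \<longrightarrow>
          (\<Sum>\<alpha>\<in>compositions n. z ^ (n - length \<alpha>) *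
              q powi (2 * int (bstat \<alpha>) - int (length \<alpha> choose 2) + int (coinv \<alpha>)))
          = (\<Sum>I\<in>Pow {1..<n}. z ^ card I * q powi (int (n choose 2) - int (\<Sum>I))))"
proof -
  have B: "bij_betw Psi (compositions n) (Pow {1..<n})"
    unfolding bij_betw_def
  proof
    show "inj_on Psi (compositions n)"
      unfolding inj_on_def by (auto simp: comp_iff intro: Psi_inj)
    show "Psi ` compositions n = Pow {1..<n}"
    proof
      show "Psi ` compositions n \<subseteq> Pow {1..<n}"
      proof
        fix I assume "I \<in> Psi ` compositions n"
        then obtain \<alpha> where "pos \<alpha>" "sum_list \<alpha> = n" "I = Psi \<alpha>" by (auto simp: comp_iff)
        then show "I \<in> Pow {1..<n}" using props by blast
      qed
      show "Pow {1..<n} \<subseteq> Psi ` compositions n"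
      proof
        fix I assume "I \<in> Pow {1..<n}"
        then obtain \<alpha> where "pos \<alpha>" "sum_list \<alpha> = n" "Psi \<alpha> = I" using Psi_surj by blast
        then show "I \<in> Psi ` compositions n" by (auto simp: comp_iff)
      qed
    qed
  qed
  have S: "\<forall>\<alpha>\<in>compositions n.
          n - length \<alpha> = card (Psi \<alpha>)
        \<and> 2 * int (bstat \<alpha>) - int (length \<alpha> choose 2) + int (coinv \<alpha>)
            = int (n choose 2) - int (\<Sum>(Psi \<alpha>))"
  proof
    fix \<alpha> assume "\<alpha> \<in> compositions n"
    then have a: "pos \<alpha>" "sum_list \<alpha> = n" by (auto simp: comp_iff)
    show "n - length \<alpha> = card (Psi \<alpha>)
        \<and> 2 * int (bstat \<alpha>) - int (length \<alpha> choose 2) + int (coinv \<alpha>)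
            = int (n choose 2) - int (\<Sum>(Psi \<alpha>))"
      using props[OF a] stat[OF a] by (simp add: bstat_pm coinv_cv)
  qed
  have G: "\<forall>(z::'a::field) (q::'a). q \<noteq> 0 \<longrightarrow>
          (\<Sum>\<alpha>\<in>compositions n. z ^ (n - length \<alpha>) *
              q powi (2 * int (bstat \<alpha>) - int (length \<alpha> choose 2) + int (coinv \<alpha>)))
          = (\<Sum>I\<in>Pow {1..<n}. z ^ card I * q powi (int (n choose 2) - int (\<Sum>I)))"
  proof (intro allI impI)
    fix z q :: 'a
    have "(\<Sum>\<alpha>\<in>compositions n. z ^ (n - length \<alpha>) *
              q powi (2 * int (bstat \<alpha>) - int (length \<alpha> choose 2) + int (coinv \<alpha>)))
        = (\<Sum>\<alpha>\<in>compositions n. (\<lambda>I. z ^ card I * q powi (int (n choose 2) - int (\<Sum>I))) (Psi \<alpha>))"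
      by (rule sum.cong) (use S in auto)
    also have "\<dots> = (\<Sum>I\<in>Pow {1..<n}. z ^ card I * q powi (int (n choose 2) - int (\<Sum>I)))"
      by (rule sum.reindex_bij_betw[OF B])
    finally show "(\<Sum>\<alpha>\<in>compositions n. z ^ (n - length \<alpha>) *
              q powi (2 * int (bstat \<alpha>) - int (length \<alpha> choose 2) + int (coinv \<alpha>)))
          = (\<Sum>I\<in>Pow {1..<n}. z ^ card I * q powi (int (n choose 2) - int (\<Sum>I)))" .
  qed
  show ?thesis using B S G by blast
qed

end
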